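(* Let $N\ge1$, $m>1$, $\alpha,\beta\in\mathbb R$ with $N+\alpha-m>0$ and $\beta-\alpha+1>0$; let $s_0\ge0$, $\lambda>0$ and $$m-1<\wp<m^*_{\alpha,\beta}-1,\qquad m^*_{\alpha,\beta}=\frac{m(N+\beta)}{N+\alpha-m}.$$ Then every positive solution $u$ of $$-(r^{N+\alpha-1}|u'(r)|^{m-2}u'(r))'=\lambda r^{N+\beta-1}u^{\wp}(r),\ r\in(s_0,\infty),\qquad u(s_0)=1,\quad u'(s_0)\le0,$$ satisfies $\lim_{r\to\infty}r^{N+\beta}u^{\wp+1}(r)=0$. In particular $\lim_{r\to\infty}u(r)=0$.
   Context: A positive solution is a positive function $u\in C^1$ on $[s_0,\infty)$ satisfying the differential equation on $(s_0,\infty)$ (with $r^{N+\alpha-1}|u'|^{m-2}u'$ of class $C^1$ there) together with the initial conditions. *)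

theory Defs
  imports "HOL-Analysis.Analysis"
begin

definition flux :: "nat \<Rightarrow> real \<Rightarrow> real \<Rightarrow> real \<Rightarrow> real \<Rightarrow> real" where
  "flux N \<alpha> m r v = r powr (real N + \<alpha> - 1) * (\<bar>v\<bar> powr (m - 2) * v)"

definition positive_solution ::
  "nat \<Rightarrow> real \<Rightarrow> real \<Rightarrow> real \<Rightarrow> real \<Rightarrow> real \<Rightarrow> real \<Rightarrow> (real \<Rightarrow> real) \<Rightarrow> bool" where
  "positive_solution N m \<alpha> \<beta> lam p s0 u \<longleftrightarrow>
     (\<forall>r\<ge>s0. u r > 0) \<and>
     (\<exists>u' w'.
        (\<forall>r\<ge>s0. (u has_real_derivative u' r) (at r within {s0..})) \<and>
        continuous_on {s0..} u' \<and>
        (\<forall>r>s0. ((\<lambda>t. flux N \<alpha> m t (u' t)) has_real_derivative w' r) (at r)) \<and>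
        continuous_on {s0<..} w' \<and>
        (\<forall>r>s0. - w' r = lam * r powr (real N + \<beta> - 1) * u r powr p) \<and>
        u s0 = 1 \<and> u' s0 \<le> 0)"

end

theory Submission
  imports Defs
begin

lemma powr_times_self: "(x::real) > 0 \<Longrightarrow> x powr c * x = x powr (c + 1)"
  by (simp add: powr_add)

lemma powr_times_self': "(x::real) > 0 \<Longrightarrow> x powr (m - 2) * x = x powr (m - 1)"
  using powr_times_self[of x "m - 2"] by simp

theorem corollary3p1:
  fixes N :: nat and m \<alpha> \<beta> s0 lam p :: real and u :: "real \<Rightarrow> real"
  assumes "N \<ge> 1" and "m > 1"
    and "real N + \<alpha> - m > 0" and "\<beta> - \<alpha> + 1 > 0"
    and "s0 \<ge> 0" and "lam > 0"
    and "m - 1 < p"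
    and "p < m * (real N + \<beta>) / (real N + \<alpha> - m) - 1"
    and "positive_solution N m \<alpha> \<beta> lam p s0 u"
  shows "((\<lambda>r. r powr (real N + \<beta>) * u r powr (p + 1)) \<longlongrightarrow> 0) at_top \<and>
         (u \<longlongrightarrow> 0) at_top"
proof -
  note hm = assms(2) and hNa = assms(3) and hba = assms(4) and hs0 = assms(5) and hlam = assms(6)
    and hp = assms(7) and hpc = assms(8)
  define a where "a = real N + \<alpha> - 1"
  define b where "b = real N + \<beta> - 1"
  have ha: "a > 0" using hNa hm unfolding a_def by linarith
  have hb1: "b + 1 > 0" using hNa hm hba unfolding b_def by linarith
  have upos: "\<And>r. r \<ge> s0 \<Longrightarrow> u r > 0" using assms(9) unfolding positive_solution_def by blast
  obtain u' w' where
    ud: "\<And>r. r\<ge>s0 \<Longrightarrow> (u has_real_derivative u' r) (at r within {s0..})" and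
    u'c: "continuous_on {s0..} u'" and
    wd0: "\<And>r. r>s0 \<Longrightarrow> ((\<lambda>t. flux N \<alpha> m t (u' t)) has_real_derivative w' r) (at r)" and
    weq: "\<And>r. r>s0 \<Longrightarrow> - w' r = lam * r powr (real N + \<beta> - 1) * u r powr p" and
    u0: "u' s0 \<le> 0"
    using assms(9) unfolding positive_solution_def by blast
  define w where "w t = t powr a * (\<bar>u' t\<bar> powr (m - 2) * u' t)" for t
  have wd: "\<And>r. r>s0 \<Longrightarrow> (w has_real_derivative w' r) (at r)"
    using wd0 unfolding w_def flux_def a_def by simp
  have w'neg: "\<And>r. r>s0 \<Longrightarrow> w' r < 0"
  proof -
    fix r assume r: "r > s0"
    have "lam * r powr b * u r powr p > 0" using r hs0 hlam upos[of r] by simp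
    then show "w' r < 0" using weq[OF r] unfolding b_def by linarith
  qed
  have uda: "\<And>r. r>s0 \<Longrightarrow> (u has_real_derivative u' r) (at r)"
  proof -
    fix r assume r: "r > s0"
    have "at r within {s0..} = at r" using at_within_interior[of r "{s0..}"] r
      by (simp add: interior_real_atLeast)
    then show "(u has_real_derivative u' r) (at r)" using ud[of r] r by simp
  qed
  have wdec: "\<And>x y. s0 < x \<Longrightarrow> x < y \<Longrightarrow> w y < w x"
  proof -
    fix x y assume xy: "s0 < x" "x < y"
    obtain z where z: "z > x" "z < y" "w y - w x = (y - x) * w' z"
      using MVT2[OF xy(2), of w w'] wd xy by force
    have "(y - x) * w' z < 0" using w'neg[of z] z xy by (simp add: mult_pos_neg)
    then show "w y < w x" using z by linarith
  qed

  have lim0: "(u' \<longlongrightarrow> u' s0) (at_right s0)"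
  proof -
    have "(u' \<longlongrightarrow> u' s0) (at s0 within {s0..})"
      using u'c hs0 unfolding continuous_on_def by auto
    then show ?thesis by (rule tendsto_within_subset) auto
  qed
  have wneg: "\<And>t. t > s0 \<Longrightarrow> w t < 0"
  proof (rule ccontr)
    fix t assume t: "t > s0" and nt: "\<not> w t < 0"
    define t' where "t' = (s0 + t) / 2"
    have t': "s0 < t'" "t' < t" using t unfolding t'_def by auto
    define \<delta> where "\<delta> = w t'"
    have d0: "\<delta> > 0" using wdec[OF t'] nt unfolding \<delta>_def by linarith
    have t'a: "t' powr a > 0" using t' hs0 by simp
    define \<delta>1 where "\<delta>1 = \<delta> / t' powr a"
    have d1: "\<delta>1 > 0" using d0 t'a unfolding \<delta>1_def by simp
    define \<delta>2 where "\<delta>2 = \<delta>1 powr (1 / (m - 1))"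
    have d2: "\<delta>2 > 0" using d1 unfolding \<delta>2_def by simp
    have big: "u' x \<ge> \<delta>2" if x: "s0 < x" "x \<le> t'" for x
    proof -
      have wx: "w x \<ge> \<delta>"
      proof (cases "x = t'")
        case True then show ?thesis unfolding \<delta>_def by simp
      next
        case False then show ?thesis using wdec[of x t'] x unfolding \<delta>_def by simp
      qed
      have xa: "x powr a > 0" using x hs0 by simp
      have up: "u' x > 0"
      proof (rule ccontr)
        assume "\<not> u' x > 0"
        then have "\<bar>u' x\<bar> powr (m - 2) * u' x \<le> 0"
          by (simp add: mult_nonneg_nonpos)
        then have "w x \<le> 0" unfolding w_def using xa by (simp add: mult_nonneg_nonpos)
        then show False using wx d0 by linarith
      qed
      have "\<bar>u' x\<bar> powr (m - 2) * u' x = u' x powr (m - 1)"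
        using up powr_times_self'[of "u' x" m] by simp
      then have wx2: "w x = x powr a * u' x powr (m - 1)" unfolding w_def by simp
      have "x powr a \<le> t' powr a" using x ha hs0 by (intro powr_mono2) auto
      then have "x powr a * u' x powr (m - 1) \<le> t' powr a * u' x powr (m - 1)"
        by (intro mult_right_mono) auto
      then have "\<delta> \<le> t' powr a * u' x powr (m - 1)" using wx wx2 by linarith
      then have ge1: "\<delta>1 \<le> u' x powr (m - 1)" unfolding \<delta>1_def using t'a
        by (simp add: divide_le_eq mult.commute)
      show ?thesis
      proof (rule ccontr)
        assume "\<not> \<delta>2 \<le> u' x"
        then have "u' x powr (m - 1) < \<delta>2 powr (m - 1)"
          using up hm by (intro powr_less_mono2) auto
        also have "\<delta>2 powr (m - 1) = \<delta>1" unfolding \<delta>2_def using hm d1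
          by (simp add: powr_powr)
        finally show False using ge1 by linarith
      qed
    qed
    have "\<forall>\<^sub>F x in at_right s0. \<delta>2 \<le> u' x"
      unfolding eventually_at_right_field using t' big by (intro exI[of _ t']) auto
    then have "\<delta>2 \<le> u' s0" using tendsto_lowerbound[OF lim0] by simp
    then show False using u0 d2 by linarith
  qed
  have u'neg: "\<And>r. r > s0 \<Longrightarrow> u' r < 0"
  proof (rule ccontr)
    fix r assume r: "r > s0" and "\<not> u' r < 0"
    then have "\<bar>u' r\<bar> powr (m - 2) * u' r \<ge> 0" by simp
    then have "w r \<ge> 0" unfolding w_def using r hs0 by simp
    then show False using wneg[OF r] by linarith
  qed
  have wform: "\<And>r. r > s0 \<Longrightarrow> - w r = r powr a * (- u' r) powr (m - 1)"
  proof -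
    fix r assume r: "r > s0"
    have "\<bar>u' r\<bar> = - u' r" using u'neg[OF r] by simp
    then have "\<bar>u' r\<bar> powr (m - 2) * u' r = - ((- u' r) powr (m - 2) * (- u' r))"
      using u'neg[OF r] by simp
    also have "\<dots> = - ((- u' r) powr (m - 1))" using powr_times_self'[of "- u' r" m] u'neg[OF r] by simp
    finally show "- w r = r powr a * (- u' r) powr (m - 1)" unfolding w_def by simp
  qed
  have udec: "\<And>x y. s0 < x \<Longrightarrow> x \<le> y \<Longrightarrow> u y \<le> u x"
  proof -
    fix x y assume xy: "s0 < x" "x \<le> y"
    show "u y \<le> u x"
      by (rule DERIV_nonpos_imp_nonincreasing[OF xy(2)])
        (use xy uda u'neg in \<open>meson less_imp_le order_less_le_trans\<close>)
  qed

  have hp0: "p > 0" using hp hm by linarith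
  define cb where "cb = min 1 ((1/2) powr b)"
  have cb0: "cb > 0" unfolding cb_def by simp
  define K where "K = lam * cb / 2"
  have K0: "K > 0" unfolding K_def using hlam cb0 by simp
  have key1: "\<And>r. r > 2 * s0 \<Longrightarrow> - w r \<ge> K * r powr (b + 1) * u r powr p"
  proof -
    fix r assume r: "r > 2 * s0"
    have r0: "r > 0" using r hs0 by linarith
    have rs: "s0 < r / 2" "r / 2 < r" using r r0 by auto
    obtain z where z: "z > r / 2" "z < r" "w r - w (r / 2) = (r - r / 2) * w' z"
      using MVT2[OF rs(2), of w w'] wd rs by force
    have zs: "z > s0" using z rs by linarith
    have z0: "z > 0" using zs hs0 by linarith
    have wr2: "w (r / 2) < 0" using wneg rs by simp
    have "- w r \<ge> (r / 2) * (- w' z)" using z wr2 by (simp add: algebra_simps)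
    also have "- w' z = lam * z powr b * u z powr p" using weq[OF zs] unfolding b_def by simp
    finally have A: "- w r \<ge> (r / 2) * (lam * z powr b * u z powr p)" .
    have uz: "u z powr p \<ge> u r powr p"
      using udec[of z r] zs z upos[of r] rs hp0 by (intro powr_mono2) auto
    have zr: "z / r \<ge> 1/2" "z / r \<le> 1" using z r0 by (auto simp: field_simps)
    have zrb: "(z / r) powr b \<ge> cb"
    proof (cases "b \<ge> 0")
      case True
      have "(1/2) powr b \<le> (z / r) powr b" using True zr by (intro powr_mono2) auto
      then show ?thesis unfolding cb_def by simp
    next
      case False
      have "1 powr b \<le> (z / r) powr b" using False zr z0 r0 by (intro powr_mono2') auto
      then show ?thesis unfolding cb_def by simp
    qed
    have "z powr b = (z / r) powr b * r powr b" using z0 r0 by (simp add: powr_divide)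
    then have zb: "z powr b \<ge> cb * r powr b" using zrb by (simp add: mult_right_mono)
    have "(r / 2) * (lam * z powr b * u z powr p) \<ge> (r / 2) * (lam * (cb * r powr b) * u r powr p)"
      using zb uz r0 hlam cb0 by (intro mult_left_mono mult_mono) auto
    also have "(r / 2) * (lam * (cb * r powr b) * u r powr p) = K * (r powr b * r) * u r powr p"
      unfolding K_def by (simp add: algebra_simps)
    also have "r powr b * r = r powr (b + 1)" using powr_times_self[OF r0] by simp
    finally show "- w r \<ge> K * r powr (b + 1) * u r powr p" using A by linarith
  qed

  define e1 where "e1 = 1 / (m - 1)"
  have e10: "e1 > 0" unfolding e1_def using hm by simp
  define \<gamma> where "\<gamma> = (b + 1 - a) * e1"
  define q where "q = p * e1"
  define K' where "K' = K powr e1"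
  have K'0: "K' > 0" unfolding K'_def using K0 by simp
  have key2: "\<And>r. r > 2 * s0 \<Longrightarrow> - u' r \<ge> K' * r powr \<gamma> * u r powr q"
  proof -
    fix r assume r: "r > 2 * s0"
    have r0: "r > 0" using r hs0 by linarith
    have rs: "r > s0" using r hs0 by linarith
    define v where "v = - u' r"
    have v0: "v > 0" unfolding v_def using u'neg[OF rs] by simp
    define X where "X = K * r powr (b + 1 - a) * u r powr p"
    have X0: "X \<ge> 0" unfolding X_def using K0 by simp
    have "r powr (b + 1) = r powr a * r powr (b + 1 - a)" by (simp add: powr_add[symmetric])
    then have "r powr a * v powr (m - 1) \<ge> r powr a * X"
      using key1[OF r] wform[OF rs] unfolding v_def X_def by (simp add: algebra_simps)
    then have vX: "v powr (m - 1) \<ge> X" using r0 by (simp add: mult_le_cancel_left_pos)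
    have "v = (v powr (m - 1)) powr e1" using v0 hm unfolding e1_def by (simp add: powr_powr)
    also have "\<dots> \<ge> X powr e1" using vX X0 e10 by (intro powr_mono2) auto
    finally have vX2: "v \<ge> X powr e1" .
    have "X powr e1 = K powr e1 * (r powr (b + 1 - a)) powr e1 * (u r powr p) powr e1"
      unfolding X_def using K0 by (simp add: powr_mult)
    also have "\<dots> = K' * r powr \<gamma> * u r powr q" unfolding K'_def \<gamma>_def q_def
      by (simp add: powr_powr)
    finally show "- u' r \<ge> K' * r powr \<gamma> * u r powr q" using vX2 unfolding v_def by simp
  qed

  have q1: "q > 1" unfolding q_def e1_def using hp hm by (simp add: field_simps)
  have g0: "\<gamma> > 0" unfolding \<gamma>_def a_def b_def using hba e10 by simp
  define f where "f r = u r powr (1 - q)" for r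
  define f' where "f' r = (1 - q) * u r powr (1 - q - 1) * u' r" for r
  have fd: "\<And>r. r > s0 \<Longrightarrow> (f has_real_derivative f' r) (at r)"
  proof -
    fix r assume r: "r > s0"
    show "(f has_real_derivative f' r) (at r)" unfolding f_def f'_def
      using uda[OF r] upos[of r] r by (auto intro!: derivative_eq_intros)
  qed
  define C0 where "C0 = (q - 1) * K'"
  have C00: "C0 > 0" unfolding C0_def using q1 K'0 by simp
  have f'ge: "\<And>r. r > 2 * s0 \<Longrightarrow> f' r \<ge> C0 * r powr \<gamma>"
  proof -
    fix r assume r: "r > 2 * s0"
    have rs: "r > s0" using r hs0 by linarith
    have ur: "u r > 0" using upos rs by simp
    have "f' r = (q - 1) * u r powr (- q) * (- u' r)" unfolding f'_def by (simp add: algebra_simps)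
    also have "\<dots> \<ge> (q - 1) * u r powr (- q) * (K' * r powr \<gamma> * u r powr q)"
      using key2[OF r] q1 by (intro mult_left_mono) auto
    also have "(q - 1) * u r powr (- q) * (K' * r powr \<gamma> * u r powr q)
        = C0 * r powr \<gamma> * (u r powr (- q) * u r powr q)" unfolding C0_def by (simp add: algebra_simps)
    also have "u r powr (- q) * u r powr q = 1" using ur by (simp add: powr_add[symmetric])
    finally show "f' r \<ge> C0 * r powr \<gamma>" by simp
  qed
  define C where "C = C0 / (\<gamma> + 1)"
  have C0': "C > 0" unfolding C_def using C00 g0 by simp
  define g where "g r = f r - C * r powr (\<gamma> + 1)" for r
  define R1 where "R1 = 2 * s0 + 1"
  have gmono: "\<And>r. r \<ge> R1 \<Longrightarrow> g R1 \<le> g r"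
  proof -
    fix r assume r: "r \<ge> R1"
    show "g R1 \<le> g r"
    proof (rule DERIV_nonneg_imp_nondecreasing[OF r])
      fix x assume x: "R1 \<le> x" "x \<le> r"
      have x0: "x > 0" and xs: "x > 2 * s0" "x > s0" using x hs0 unfolding R1_def by linarith+
      have "(g has_real_derivative f' x - C * ((\<gamma> + 1) * x powr \<gamma>)) (at x)"
        unfolding g_def using fd[OF xs(2)] x0
        by (auto intro!: derivative_eq_intros)
      moreover have "f' x - C * ((\<gamma> + 1) * x powr \<gamma>) \<ge> 0"
        using f'ge[OF xs(1)] g0 unfolding C_def by simp
      ultimately show "\<exists>y. (g has_real_derivative y) (at x) \<and> 0 \<le> y" by blast
    qed
  qed

  define e2 where "e2 = 1 / (1 - q)"
  have e2n: "e2 < 0" unfolding e2_def using q1 by simp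
  define D where "D = (C / 2) powr e2"
  have D0: "D > 0" unfolding D_def using C0' by simp
  define \<theta> where "\<theta> = - ((\<gamma> + 1) * e2)"
  have th0: "\<theta> > 0" unfolding \<theta>_def using e2n g0 by (simp add: mult_pos_neg)
  define R2 where "R2 = max (max R1 1) (2 * \<bar>g R1\<bar> / C)"
  have ubound: "\<And>r. r \<ge> R2 \<Longrightarrow> u r \<le> D * r powr (- \<theta>)"
  proof -
    fix r assume r: "r \<ge> R2"
    have rR1: "r \<ge> R1" and r1: "r \<ge> 1" and rg: "r \<ge> 2 * \<bar>g R1\<bar> / C"
      using r unfolding R2_def by auto
    have r0: "r > 0" using r1 by simp
    have rs: "r > s0" using rR1 hs0 unfolding R1_def by linarith
    have ur: "u r > 0" using upos rs by simp
    have "r powr (\<gamma> + 1) \<ge> r powr 1" using r1 g0 by (intro powr_mono) auto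
    then have rp: "r powr (\<gamma> + 1) \<ge> r" using r0 by simp
    have "C / 2 * r \<ge> \<bar>g R1\<bar>" using rg C0' by (simp add: field_simps)
    then have "C / 2 * r powr (\<gamma> + 1) \<ge> \<bar>g R1\<bar>" using rp C0'
      by (smt (verit) mult_left_mono divide_pos_pos)
    moreover have "f r = g r + C * r powr (\<gamma> + 1)" unfolding g_def by simp
    ultimately have fr: "f r \<ge> C / 2 * r powr (\<gamma> + 1)" using gmono[OF rR1] by linarith
    have "u r = f r powr e2" unfolding f_def e2_def using ur q1 by (simp add: powr_powr)
    also have "\<dots> \<le> (C / 2 * r powr (\<gamma> + 1)) powr e2"
      using fr e2n C0' r0 by (intro powr_mono2') auto
    also have "\<dots> = (C / 2) powr e2 * (r powr (\<gamma> + 1)) powr e2"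
      using C0' r0 by (rule_tac powr_mult; simp)
    also have "\<dots> = D * r powr (- \<theta>)" unfolding D_def \<theta>_def
      by (simp add: powr_powr)
    finally show "u r \<le> D * r powr (- \<theta>)" .
  qed
  have theq: "\<theta> = (\<beta> - \<alpha> + m) / (p - m + 1)"
  proof -
    have m1: "m - 1 \<noteq> 0" using hm by simp
    have pm: "p - m + 1 \<noteq> 0" using hp by simp
    have G: "\<gamma> + 1 = (\<beta> - \<alpha> + m) / (m - 1)"
      unfolding \<gamma>_def e1_def a_def b_def using m1 by (simp add: field_simps)
    have Q: "1 - q = - (p - m + 1) / (m - 1)"
      unfolding q_def e1_def using m1 by (simp add: field_simps)
    have "\<theta> = (\<gamma> + 1) / (- (1 - q))" unfolding \<theta>_def e2_def
      by (metis divide_minus_right minus_divide_left times_divide_eq_right mult_1_right)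
    also have "- (1 - q) = q - 1" by simp
    also have "q - 1 = (p - m + 1) / (m - 1)"
      unfolding q_def e1_def using m1 by (simp add: field_simps)
    also have "(\<gamma> + 1) / ((p - m + 1) / (m - 1)) = (\<beta> - \<alpha> + m) / (p - m + 1)"
      unfolding G using m1 pm by simp
    finally show ?thesis .
  qed
  define E where "E = real N + \<beta> - \<theta> * (p + 1)"
  have En: "E < 0"
  proof -
    have den: "real N + \<alpha> - m > 0" by fact
    have A: "(p + 1) * (real N + \<alpha> - m) < m * (real N + \<beta>)"
      using hpc den by (simp add: less_divide_eq algebra_simps)
    have B: "(\<beta> - \<alpha> + m) * (p + 1) - (real N + \<beta>) * (p - m + 1)
        = m * (real N + \<beta>) - (p + 1) * (real N + \<alpha> - m)" by (simp add: algebra_simps)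
    have pm: "p - m + 1 > 0" using hp by simp
    have "(real N + \<beta>) * (p - m + 1) < (\<beta> - \<alpha> + m) * (p + 1)" using A B by linarith
    then have "real N + \<beta> < (\<beta> - \<alpha> + m) * (p + 1) / (p - m + 1)"
      using pm by (simp add: less_divide_eq)
    then show ?thesis unfolding E_def theq by simp
  qed

  have lE: "((\<lambda>r. r powr E) \<longlongrightarrow> 0) at_top" by (rule tendsto_neg_powr[OF En filterlim_ident])
  have lth: "((\<lambda>r. r powr (- \<theta>)) \<longlongrightarrow> 0) at_top"
    by (rule tendsto_neg_powr[OF _ filterlim_ident]) (use th0 in simp)
  have ev: "\<forall>\<^sub>F r in at_top. r \<ge> max R2 1" by (rule eventually_ge_at_top)
  have part1: "((\<lambda>r. r powr (real N + \<beta>) * u r powr (p + 1)) \<longlongrightarrow> 0) at_top"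
  proof (rule tendsto_sandwich[of "\<lambda>_. 0" _ _ "\<lambda>r. D powr (p + 1) * r powr E"])
    show "\<forall>\<^sub>F r in at_top. 0 \<le> r powr (real N + \<beta>) * u r powr (p + 1)"
      by (rule always_eventually) simp
    show "\<forall>\<^sub>F r in at_top. r powr (real N + \<beta>) * u r powr (p + 1) \<le> D powr (p + 1) * r powr E"
      using ev
    proof (rule eventually_mono)
      fix r assume r: "r \<ge> max R2 1"
      have r0: "r > 0" using r by simp
      have "u r \<ge> 0" using upos[of r] r hs0 unfolding R2_def R1_def by auto
      then have "u r powr (p + 1) \<le> (D * r powr (- \<theta>)) powr (p + 1)"
        using ubound[of r] r hp0 by (intro powr_mono2) auto
      also have "\<dots> = D powr (p + 1) * (r powr (- \<theta>)) powr (p + 1)"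
        using D0 by (rule_tac powr_mult; simp)
      also have "\<dots> = D powr (p + 1) * r powr (- \<theta> * (p + 1))" by (simp add: powr_powr)
      finally have "r powr (real N + \<beta>) * u r powr (p + 1)
          \<le> r powr (real N + \<beta>) * (D powr (p + 1) * r powr (- \<theta> * (p + 1)))"
        by (intro mult_left_mono) auto
      also have "\<dots> = D powr (p + 1) * (r powr (real N + \<beta>) * r powr (- \<theta> * (p + 1)))"
        by (simp add: algebra_simps)
      also have "r powr (real N + \<beta>) * r powr (- \<theta> * (p + 1)) = r powr E"
        unfolding E_def by (simp add: powr_add[symmetric])
      finally show "r powr (real N + \<beta>) * u r powr (p + 1) \<le> D powr (p + 1) * r powr E" .
    qed
    show "((\<lambda>_. 0) \<longlongrightarrow> (0::real)) at_top" by simp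
    show "((\<lambda>r. D powr (p + 1) * r powr E) \<longlongrightarrow> 0) at_top"
      using tendsto_mult[OF tendsto_const lE, of "D powr (p + 1)"] by simp
  qed
  have part2: "(u \<longlongrightarrow> 0) at_top"
  proof (rule tendsto_sandwich[of "\<lambda>_. 0" _ _ "\<lambda>r. D * r powr (- \<theta>)"])
    show "\<forall>\<^sub>F r in at_top. 0 \<le> u r"
      using ev by (rule eventually_mono) (use upos hs0 in \<open>auto simp: R2_def R1_def intro: less_imp_le\<close>)
    show "\<forall>\<^sub>F r in at_top. u r \<le> D * r powr (- \<theta>)"
      using ev by (rule eventually_mono) (use ubound in auto)
    show "((\<lambda>_. 0) \<longlongrightarrow> (0::real)) at_top" by simp
    show "((\<lambda>r. D * r powr (- \<theta>)) \<longlongrightarrow> 0) at_top"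
      using tendsto_mult[OF tendsto_const lth, of D] by simp
  qed
  show ?thesis using part1 part2 by blast
qed

end
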